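(* Let $\mathcal{T}=(V,A,E,f,q,v_0)$ be a decorated rooted tree and let $v,w\in V$ be such that $v<w$ or $w<v$. If $\mathcal{T}$ has negative determinants then $\det(\gamma_{v,w})<0$; if $\mathcal{T}$ has positive determinants then $\det(\gamma_{v,w})>0$.
   Context: A graph is a pair $(X_0,X_1)$ of finite sets such that each element of $X_1$ (an edge) is a $2$-element subset of $X_0$; elements of $X_0$ are cells. A path is a tuple $(x_0,\dots,x_n)$ ($n\ge0$) of cells with $\{x_i,x_{i+1}\}$ an edge for each $i<n$, these edges pairwise distinct; a cell/edge is in the path if it is some $x_i$ / some $\{x_i,x_{i+1}\}$. The graph is a tree if any two cells $x,y$ are joined by a unique path $\gamma_{x,y}$. A decorated tree is $(V,A,E,f,q)$ with $V$ (vertices), $A$ (arrows) finite disjoint sets, $(V\cup A,E)$ a tree, every arrow contained in exactly one edge, $f:A\to\mathbb{Z}$, $q(e,x)\in\mathbb{Z}$ for each $e\in E$, $x\in e$, with $q(e,\alpha)=1$ for $\alpha\in A$, and for each $v\in V$ and distinct edges $e,e'\ni v$, $\gcd(q(e,v),q(e',v))=1$. For $x\in V\cup A$, $e\ni x$: $Q(e,x)=\prod q(e',x)$ over edges $e'\ne e$ containing $x$ (empty product $=1$); for an edge $e=\{x,y\}$, $\det(e)=q(e,x)q(e,y)-Q(e,x)Q(e,y)$. For a path $\gamma=(x_0,\dots,x_n)$ with $n>0$: $q(\gamma,x_0)=q(\{x_0,x_1\},x_0)$, $q(\gamma,x_n)=q(\{x_{n-1},x_n\},x_n)$; for a cell $u$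 of $\gamma$, $Q(\gamma,u)=\prod q(\varepsilon,u)$ over edges $\varepsilon\ni u$ not in $\gamma$; $Q^*(\gamma)=\prod_{0<i<n}Q(\gamma,x_i)$; and $\det(\gamma)=q(\gamma,x_0)q(\gamma,x_n)-Q^*(\gamma)^2Q(\gamma,x_0)Q(\gamma,x_n)$. A root of $(V,A,E,f,q)$ is a vertex $v_0$ with $q(e,v_0)=1$ for every edge $e\ni v_0$ such that for every $v\in V\setminus\{v_0\}$, all edges $e\ni v$ not in $\gamma_{v_0,v}$ satisfy $q(e,v)\ge1$ and at most one of them satisfies $q(e,v)\ne1$. A decorated rooted tree is $(V,A,E,f,q,v_0)$ with $v_0$ a root. For distinct $x,y\in V\cup A$, $x<y$ means $x$ is in $\gamma_{v_0,y}$. $\mathcal{T}$ has negative (resp. positive) determinants if $\det(e)<0$ (resp. $>0$) for every edge $e=\{x,y\}$ with $x,y\in V$. *)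

theory Defs
  imports Main
begin

definition graph :: "'a set \<Rightarrow> 'a set set \<Rightarrow> bool" where
  "graph X0 X1 \<longleftrightarrow> finite X0 \<and> finite X1 \<and> (\<forall>e\<in>X1. e \<subseteq> X0 \<and> card e = 2)"

definition path_edge :: "'a list \<Rightarrow> nat \<Rightarrow> 'a set" where
  "path_edge xs i = {xs ! i, xs ! Suc i}"

definition path_edges :: "'a list \<Rightarrow> 'a set set" where
  "path_edges xs = {path_edge xs i | i. Suc i < length xs}"

definition is_path :: "'a set \<Rightarrow> 'a set set \<Rightarrow> 'a list \<Rightarrow> bool" where
  "is_path X0 X1 xs \<longleftrightarrow> xs \<noteq> [] \<and> set xs \<subseteq> X0 \<and>
     (\<forall>i. Suc i < length xs \<longrightarrow> path_edge xs i \<in> X1) \<and>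
     (\<forall>i j. Suc i < length xs \<longrightarrow> Suc j < length xs \<longrightarrow> i \<noteq> j \<longrightarrow> path_edge xs i \<noteq> path_edge xs j)"

definition is_tree :: "'a set \<Rightarrow> 'a set set \<Rightarrow> bool" where
  "is_tree X0 X1 \<longleftrightarrow> graph X0 X1 \<and>
     (\<forall>x\<in>X0. \<forall>y\<in>X0. \<exists>!p. is_path X0 X1 p \<and> hd p = x \<and> last p = y)"

definition gpath :: "'a set \<Rightarrow> 'a set set \<Rightarrow> 'a \<Rightarrow> 'a \<Rightarrow> 'a list" where
  "gpath X0 X1 x y = (THE p. is_path X0 X1 p \<and> hd p = x \<and> last p = y)"

definition decorated_tree ::
  "'a set \<Rightarrow> 'a set \<Rightarrow> 'a set set \<Rightarrow> ('a \<Rightarrow> int) \<Rightarrow> ('a set \<Rightarrow> 'a \<Rightarrow> int) \<Rightarrow> bool" where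
  "decorated_tree V A E f q \<longleftrightarrow> finite V \<and> finite A \<and> V \<inter> A = {} \<and> is_tree (V \<union> A) E \<and>
     (\<forall>\<alpha>\<in>A. card {e\<in>E. \<alpha> \<in> e} = 1) \<and>
     (\<forall>e\<in>E. \<forall>\<alpha>\<in>A. \<alpha> \<in> e \<longrightarrow> q e \<alpha> = 1) \<and>
     (\<forall>v\<in>V. \<forall>e\<in>E. \<forall>e'\<in>E. v \<in> e \<longrightarrow> v \<in> e' \<longrightarrow> e \<noteq> e' \<longrightarrow> gcd (q e v) (q e' v) = 1)"

definition Qe :: "'a set set \<Rightarrow> ('a set \<Rightarrow> 'a \<Rightarrow> int) \<Rightarrow> 'a set \<Rightarrow> 'a \<Rightarrow> int" where
  "Qe E q e x = (\<Prod>e'\<in>{e'\<in>E. x \<in> e' \<and> e' \<noteq> e}. q e' x)"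

definition det_edge :: "'a set set \<Rightarrow> ('a set \<Rightarrow> 'a \<Rightarrow> int) \<Rightarrow> 'a \<Rightarrow> 'a \<Rightarrow> int" where
  "det_edge E q x y = q {x,y} x * q {x,y} y - Qe E q {x,y} x * Qe E q {x,y} y"

definition Qpath :: "'a set set \<Rightarrow> ('a set \<Rightarrow> 'a \<Rightarrow> int) \<Rightarrow> 'a list \<Rightarrow> 'a \<Rightarrow> int" where
  "Qpath E q xs u = (\<Prod>\<epsilon>\<in>{\<epsilon>\<in>E. u \<in> \<epsilon> \<and> \<epsilon> \<notin> path_edges xs}. q \<epsilon> u)"

definition Qstar :: "'a set set \<Rightarrow> ('a set \<Rightarrow> 'a \<Rightarrow> int) \<Rightarrow> 'a list \<Rightarrow> int" where
  "Qstar E q xs = (\<Prod>i\<in>{0<..<length xs - 1}. Qpath E q xs (xs ! i))"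

definition det_path :: "'a set set \<Rightarrow> ('a set \<Rightarrow> 'a \<Rightarrow> int) \<Rightarrow> 'a list \<Rightarrow> int" where
  "det_path E q xs =
     (let n = length xs - 1 in
      q (path_edge xs 0) (xs ! 0) * q (path_edge xs (n - 1)) (xs ! n)
      - (Qstar E q xs)^2 * Qpath E q xs (xs ! 0) * Qpath E q xs (xs ! n))"

definition is_root ::
  "'a set \<Rightarrow> 'a set \<Rightarrow> 'a set set \<Rightarrow> ('a \<Rightarrow> int) \<Rightarrow> ('a set \<Rightarrow> 'a \<Rightarrow> int) \<Rightarrow> 'a \<Rightarrow> bool" where
  "is_root V A E f q v0 \<longleftrightarrow> v0 \<in> V \<and> (\<forall>e\<in>E. v0 \<in> e \<longrightarrow> q e v0 = 1) \<and>
     (\<forall>v\<in>V - {v0}.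
        (\<forall>e\<in>E. v \<in> e \<longrightarrow> e \<notin> path_edges (gpath (V \<union> A) E v0 v) \<longrightarrow> q e v \<ge> 1) \<and>
        card {e\<in>E. v \<in> e \<and> e \<notin> path_edges (gpath (V \<union> A) E v0 v) \<and> q e v \<noteq> 1} \<le> 1)"

definition decorated_rooted_tree ::
  "'a set \<Rightarrow> 'a set \<Rightarrow> 'a set set \<Rightarrow> ('a \<Rightarrow> int) \<Rightarrow> ('a set \<Rightarrow> 'a \<Rightarrow> int) \<Rightarrow> 'a \<Rightarrow> bool" where
  "decorated_rooted_tree V A E f q v0 \<longleftrightarrow> decorated_tree V A E f q \<and> is_root V A E f q v0"

definition tree_less :: "'a set \<Rightarrow> 'a set \<Rightarrow> 'a set set \<Rightarrow> 'a \<Rightarrow> 'a \<Rightarrow> 'a \<Rightarrow> bool" where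
  "tree_less V A E v0 x y \<longleftrightarrow> x \<noteq> y \<and> x \<in> set (gpath (V \<union> A) E v0 y)"

definition negative_determinants :: "'a set \<Rightarrow> 'a set set \<Rightarrow> ('a set \<Rightarrow> 'a \<Rightarrow> int) \<Rightarrow> bool" where
  "negative_determinants V E q \<longleftrightarrow> (\<forall>x\<in>V. \<forall>y\<in>V. {x,y} \<in> E \<longrightarrow> det_edge E q x y < 0)"

definition positive_determinants :: "'a set \<Rightarrow> 'a set set \<Rightarrow> ('a set \<Rightarrow> 'a \<Rightarrow> int) \<Rightarrow> bool" where
  "positive_determinants V E q \<longleftrightarrow> (\<forall>x\<in>V. \<forall>y\<in>V. {x,y} \<in> E \<longrightarrow> det_edge E q x y > 0)"

end

theory Submission
  imports Defs
begin

lemma step_neg: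
  fixes c0 c1 p R T bm b1 :: int
  assumes "c0 > 0" "c1 > 0" "p > 0" "R > 0" "c0 * bm < T * (c1 * p)" "c1 * b1 < bm * p * R"
  shows "c0 * b1 < T * p * p * R"
proof -
  have "c1 * (c0 * b1) = c0 * (c1 * b1)" by simp
  also have "\<dots> < c0 * (bm * p * R)" using assms by simp
  also have "\<dots> = (c0 * bm) * (p * R)" by simp
  also have "\<dots> < (T * (c1 * p)) * (p * R)" using assms by (intro mult_strict_right_mono) auto
  also have "\<dots> = c1 * (T * p * p * R)" by simp
  finally show ?thesis using assms(2) by simp
qed

lemma step_pos:
  fixes c0 c1 p R T bm b1 :: int
  assumes "c0 > 0" "c1 > 0" "p > 0" "R > 0" "c0 * bm > T * (c1 * p)" "c1 * b1 > bm * p * R"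
  shows "c0 * b1 > T * p * p * R"
proof -
  have "c1 * (T * p * p * R) = (T * (c1 * p)) * (p * R)" by simp
  also have "\<dots> < (c0 * bm) * (p * R)" using assms by (intro mult_strict_right_mono) auto
  also have "\<dots> = c0 * (bm * p * R)" by simp
  also have "\<dots> < c0 * (c1 * b1)" using assms by simp
  also have "\<dots> = c1 * (c0 * b1)" by simp
  finally show ?thesis using assms(2) by simp
qed

lemma prod_Suc_split: "(\<Prod>i\<in>{0<..Suc m}. (P::nat\<Rightarrow>int) i) = (\<Prod>i\<in>{0<..m}. P i) * P (Suc m)"
proof -
  have "{0<..Suc m} = insert (Suc m) {0<..m}" by auto
  then show ?thesis by simp
qed

lemma chain_neg:
  fixes c b P :: "nat \<Rightarrow> int"
  assumes c: "\<And>j. j<n \<Longrightarrow> c j > 0" and P: "\<And>i. 0<i \<Longrightarrow> i\<le>n \<Longrightarrow> P i > 0"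
  and e: "\<And>j. j<n \<Longrightarrow> c j * b j < (if j=0 then P 0 else b (j-1) * P j) *
             (if Suc j = n then P n else c (Suc j) * P (Suc j))"
  shows "m<n \<Longrightarrow> c 0 * b m < (\<Prod>i\<in>{0<..m}. P i)^2 * P 0 *
             (if Suc m = n then P n else c (Suc m) * P (Suc m))"
proof (induction m)
  case 0 then show ?case using e[of 0] by simp
next
  case (Suc m)
  let ?R = "(if Suc (Suc m) = n then P n else c (Suc (Suc m)) * P (Suc (Suc m)))"
  have IH: "c 0 * b m < (\<Prod>i\<in>{0<..m}. P i)^2 * P 0 * (c (Suc m) * P (Suc m))"
    using Suc by simp
  have ed: "c (Suc m) * b (Suc m) < b m * P (Suc m) * ?R" using e[of "Suc m"] Suc.prems by simp
  have R: "?R > 0" using c P Suc.prems by (auto intro: mult_pos_pos)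
  have "c 0 * b (Suc m) < ((\<Prod>i\<in>{0<..m}. P i)^2 * P 0) * P (Suc m) * P (Suc m) * ?R"
    by (rule step_neg[OF _ _ _ R _ ed]) (use c P Suc.prems IH in \<open>auto simp: mult.assoc\<close>)
  then show ?case using Suc.prems by (simp add: prod_Suc_split power2_eq_square mult_ac)
qed

lemma chain_pos:
  fixes c b P :: "nat \<Rightarrow> int"
  assumes c: "\<And>j. j<n \<Longrightarrow> c j > 0" and P: "\<And>i. 0<i \<Longrightarrow> i\<le>n \<Longrightarrow> P i > 0"
  and e: "\<And>j. j<n \<Longrightarrow> c j * b j > (if j=0 then P 0 else b (j-1) * P j) *
             (if Suc j = n then P n else c (Suc j) * P (Suc j))"
  shows "m<n \<Longrightarrow> c 0 * b m > (\<Prod>i\<in>{0<..m}. P i)^2 * P 0 *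
             (if Suc m = n then P n else c (Suc m) * P (Suc m))"
proof (induction m)
  case 0 then show ?case using e[of 0] by simp
next
  case (Suc m)
  let ?R = "(if Suc (Suc m) = n then P n else c (Suc (Suc m)) * P (Suc (Suc m)))"
  have IH: "c 0 * b m > (\<Prod>i\<in>{0<..m}. P i)^2 * P 0 * (c (Suc m) * P (Suc m))"
    using Suc by simp
  have ed: "c (Suc m) * b (Suc m) > b m * P (Suc m) * ?R" using e[of "Suc m"] Suc.prems by simp
  have R: "?R > 0" using c P Suc.prems by (auto intro: mult_pos_pos)
  have "c 0 * b (Suc m) > ((\<Prod>i\<in>{0<..m}. P i)^2 * P 0) * P (Suc m) * P (Suc m) * ?R"
    by (rule step_pos[OF _ _ _ R _ ed]) (use c P Suc.prems IH in \<open>auto simp: mult.assoc\<close>)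
  then show ?case using Suc.prems by (simp add: prod_Suc_split power2_eq_square mult_ac)
qed

lemma path_edges_iff: "e \<in> path_edges xs \<longleftrightarrow> (\<exists>i. Suc i < length xs \<and> e = path_edge xs i)"
  unfolding path_edges_def by auto

lemma is_path_take:
  assumes "is_path X0 X1 p" "j < length p"
  shows "is_path X0 X1 (take (Suc j) p)"
proof -
  have pe: "path_edge (take (Suc j) p) i = path_edge p i" if "Suc i < Suc j" for i
    using that assms(2) by (simp add: path_edge_def)
  show ?thesis using assms unfolding is_path_def
    apply (intro conjI)
    subgoal by (cases p) auto
    subgoal by (meson order_trans set_take_subset)
    subgoal using pe by (simp add: min_def split: if_splits)
    subgoal using pe by (simp add: min_def split: if_splits)
    done
qed

lemma is_path_drop:
  assumes "is_path X0 X1 p" "k < length p"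
  shows "is_path X0 X1 (drop k p)"
proof -
  have pe: "path_edge (drop k p) i = path_edge p (k+i)" if "Suc i < length p - k" for i
    using that assms(2) by (simp add: path_edge_def)
  have d: "\<forall>i j. Suc i < length p \<longrightarrow> Suc j < length p \<longrightarrow> i \<noteq> j \<longrightarrow> path_edge p i \<noteq> path_edge p j"
    and m: "\<forall>i. Suc i < length p \<longrightarrow> path_edge p i \<in> X1" and s: "set p \<subseteq> X0"
    using assms(1) unfolding is_path_def by auto
  have "path_edge (drop k p) i \<noteq> path_edge (drop k p) j"
    if h: "Suc i < length (drop k p)" "Suc j < length (drop k p)" "i \<noteq> j" for i j
  proof -
    from h have "k + i \<noteq> k + j" "Suc (k+i) < length p" "Suc (k+j) < length p" by auto
    then show ?thesis using d pe h(1,2) by simp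
  qed
  moreover have "path_edge (drop k p) i \<in> X1" if "Suc i < length (drop k p)" for i
    using that pe m by simp
  moreover have "set (drop k p) \<subseteq> X0" using s by (meson order_trans set_drop_subset)
  ultimately show ?thesis using assms(2) unfolding is_path_def by auto
qed

lemma is_path_rev:
  assumes "is_path X0 X1 p"
  shows "is_path X0 X1 (rev p)"
proof -
  have pe: "path_edge (rev p) i = path_edge p (length p - 2 - i)" if "Suc i < length p" for i
  proof -
    have "rev p ! i = p ! Suc (length p - 2 - i)" "rev p ! Suc i = p ! (length p - 2 - i)"
      using that by (simp_all add: rev_nth Suc_diff_Suc numeral_2_eq_2)
    then show ?thesis by (simp add: path_edge_def insert_commute)
  qed
  have d: "\<forall>i j. Suc i < length p \<longrightarrow> Suc j < length p \<longrightarrow> i \<noteq> j \<longrightarrow> path_edge p i \<noteq> path_edge p j"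
    and m: "\<forall>i. Suc i < length p \<longrightarrow> path_edge p i \<in> X1"
    using assms(1) unfolding is_path_def by auto
  have "path_edge (rev p) i \<noteq> path_edge (rev p) j"
    if h: "Suc i < length (rev p)" "Suc j < length (rev p)" "i \<noteq> j" for i j
  proof -
    from h have "length p - 2 - i \<noteq> length p - 2 - j" "Suc (length p - 2 - i) < length p"
        "Suc (length p - 2 - j) < length p" by auto
    then show ?thesis using d pe h(1,2) by simp
  qed
  moreover have "path_edge (rev p) i \<in> X1" if "Suc i < length (rev p)" for i
  proof -
    have "Suc (length p - 2 - i) < length p" using that by auto
    then show ?thesis using that pe m by simp
  qed
  ultimately show ?thesis using assms(1) unfolding is_path_def by auto
qed

lemma gpath_props:
  assumes "is_tree X0 X1" "x \<in> X0" "y \<in> X0"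
  shows "is_path X0 X1 (gpath X0 X1 x y) \<and> hd (gpath X0 X1 x y) = x \<and> last (gpath X0 X1 x y) = y"
proof -
  have "\<exists>!p. is_path X0 X1 p \<and> hd p = x \<and> last p = y" using assms unfolding is_tree_def by blast
  then show ?thesis unfolding gpath_def by (rule theI')
qed

lemma gpath_unique:
  assumes "is_tree X0 X1" "is_path X0 X1 p"
  shows "gpath X0 X1 (hd p) (last p) = p"
proof -
  have ne: "p \<noteq> []" and s: "set p \<subseteq> X0" using assms(2) unfolding is_path_def by auto
  have "hd p \<in> X0" "last p \<in> X0" using ne s by auto
  then have "\<exists>!p'. is_path X0 X1 p' \<and> hd p' = hd p \<and> last p' = last p"
    using assms unfolding is_tree_def by blast
  then show ?thesis unfolding gpath_def using assms(2) by (simp add: the1_equality)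
qed

lemma tree_path_distinct:
  assumes T: "is_tree X0 X1" and p: "is_path X0 X1 p"
  shows "distinct p"
proof (rule ccontr)
  assume "\<not> distinct p"
  then obtain i0 j0 where h0: "i0 < length p" "j0 < length p" "i0 \<noteq> j0" "p ! i0 = p ! j0"
    unfolding distinct_conv_nth by blast
  define i where "i = min i0 j0"
  define j where "j = max i0 j0"
  have ij: "i < j" "j < length p" "p ! i = p ! j" using h0 unfolding i_def j_def
    by (auto simp: min_def max_def)
  define s where "s = take (Suc (j - i)) (drop i p)"
  have sp: "is_path X0 X1 s" unfolding s_def
    by (rule is_path_take[OF is_path_drop[OF p]]) (use ij in auto)
  have ls: "length s = Suc (j - i)" using ij by (simp add: s_def)
  have "hd s = p ! i" using ij by (simp add: s_def hd_conv_nth)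
  moreover have "last s = p ! j" using ij ls by (simp add: s_def last_conv_nth)
  ultimately have g1: "gpath X0 X1 (p!i) (p!i) = s" using gpath_unique[OF T sp] ij by simp
  have "p ! i \<in> X0" using p ij unfolding is_path_def by auto
  then have sing: "is_path X0 X1 [p!i]" unfolding is_path_def by simp
  have "gpath X0 X1 (p!i) (p!i) = [p!i]" using gpath_unique[OF T sing] by simp
  with g1 ls ij show False by simp
qed

lemma pe_at:
  assumes "distinct xs" "e \<in> path_edges xs" "i < length xs" "xs ! i \<in> e"
  shows "(Suc i < length xs \<and> e = path_edge xs i) \<or> (0 < i \<and> e = path_edge xs (i-1))"
proof -
  from assms(2) obtain j where j1: "Suc j < length xs" and j2: "e = path_edge xs j"
    unfolding path_edges_def by blast
  have "xs ! i = xs ! j \<or> xs ! i = xs ! Suc j" using assms(4) j2 by (simp add: path_edge_def)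
  then have "i = j \<or> i = Suc j"
  proof
    assume "xs ! i = xs ! j" then show ?thesis
      using nth_eq_iff_index_eq[OF assms(1) assms(3), of j] j1 by simp
  next
    assume "xs ! i = xs ! Suc j" then show ?thesis
      using nth_eq_iff_index_eq[OF assms(1) assms(3), of "Suc j"] j1 by simp
  qed
  then show ?thesis
  proof
    assume "i = j" then show ?thesis using j1 j2 by simp
  next
    assume "i = Suc j" then show ?thesis using j1 j2 by simp
  qed
qed

lemma diff_lt0: "(a::int) - b < 0 \<Longrightarrow> a < b" by simp
lemma diff_gt0: "(a::int) - b > 0 \<Longrightarrow> a > b" by simp

lemma path_det_core:
  fixes E :: "'a set set" and q :: "'a set \<Rightarrow> 'a \<Rightarrow> int" and x :: "'a list"
  assumes fin: "finite E" and dx: "distinct x" and len: "length x = Suc n" and n1: "n \<ge> 1"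
  and pE: "\<And>j. j<n \<Longrightarrow> path_edge x j \<in> E"
  and F1: "\<And>j. j<n \<Longrightarrow> q (path_edge x j) (x!j) \<ge> 1"
  and F2: "\<And>i e. 0<i \<Longrightarrow> i\<le>n \<Longrightarrow> e \<in> E \<Longrightarrow> x!i \<in> e \<Longrightarrow> e \<notin> path_edges x \<Longrightarrow> q e (x!i) \<ge> 1"
  shows "((\<forall>j<n. det_edge E q (x!j) (x!Suc j) < 0) \<longrightarrow> det_path E q x < 0) \<and>
         ((\<forall>j<n. det_edge E q (x!j) (x!Suc j) > 0) \<longrightarrow> det_path E q x > 0)"
proof -
  define N where "N i = {e\<in>E. x!i \<in> e \<and> e \<notin> path_edges x}" for i
  define P where "P i = Qpath E q x (x!i)" for i
  define c where "c j = q (path_edge x j) (x!j)" for j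
  define b where "b j = q (path_edge x j) (x!Suc j)" for j
  have P_N: "P i = (\<Prod>e\<in>N i. q e (x!i))" for i unfolding P_def N_def Qpath_def by simp
  have finN: "finite (N i)" for i unfolding N_def using fin by simp
  have inpe: "path_edge x j \<in> path_edges x" if "j < n" for j
    using that len unfolding path_edges_def by auto
  have pe_ne: "path_edge x j \<noteq> path_edge x (Suc j)" if "Suc j < n" for j
  proof
    assume h: "path_edge x j = path_edge x (Suc j)"
    have "x ! Suc (Suc j) \<in> path_edge x j" using h by (simp add: path_edge_def)
    then have "x ! Suc (Suc j) = x ! j \<or> x ! Suc (Suc j) = x ! Suc j" by (simp add: path_edge_def)
    moreover have "x ! Suc (Suc j) \<noteq> x ! j"
      using nth_eq_iff_index_eq[OF dx, of "Suc (Suc j)" j] that len by simp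
    moreover have "x ! Suc (Suc j) \<noteq> x ! Suc j"
      using nth_eq_iff_index_eq[OF dx, of "Suc (Suc j)" "Suc j"] that len by simp
    ultimately show False by simp
  qed
  have S1: "{e'\<in>E. x!j \<in> e' \<and> e' \<noteq> path_edge x j} =
      (if j=0 then N j else insert (path_edge x (j-1)) (N j))" if j: "j<n" for j
  proof (intro set_eqI iffI)
    fix e assume e: "e \<in> {e'\<in>E. x!j \<in> e' \<and> e' \<noteq> path_edge x j}"
    show "e \<in> (if j=0 then N j else insert (path_edge x (j-1)) (N j))"
    proof (cases "e \<in> path_edges x")
      case True
      then have "(Suc j < length x \<and> e = path_edge x j) \<or> (0 < j \<and> e = path_edge x (j-1))"
        using pe_at[OF dx True, of j] e j len by simp
      then show ?thesis using e by auto
    next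
      case False then show ?thesis using e unfolding N_def by auto
    qed
  next
    fix e assume e: "e \<in> (if j=0 then N j else insert (path_edge x (j-1)) (N j))"
    show "e \<in> {e'\<in>E. x!j \<in> e' \<and> e' \<noteq> path_edge x j}"
    proof (cases "e \<in> N j")
      case True then show ?thesis using inpe[OF j] unfolding N_def by auto
    next
      case False
      then have "0 < j" "e = path_edge x (j-1)" using e by (auto split: if_splits)
      then show ?thesis using pE[of "j-1"] j pe_ne[of "j-1"] by (auto simp: path_edge_def)
    qed
  qed
  have S2: "{e'\<in>E. x!Suc j \<in> e' \<and> e' \<noteq> path_edge x j} =
      (if Suc j = n then N (Suc j) else insert (path_edge x (Suc j)) (N (Suc j)))" if j: "j<n" for j
  proof (intro set_eqI iffI)
    fix e assume e: "e \<in> {e'\<in>E. x!Suc j \<in> e' \<and> e' \<noteq> path_edge x j}"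
    show "e \<in> (if Suc j = n then N (Suc j) else insert (path_edge x (Suc j)) (N (Suc j)))"
    proof (cases "e \<in> path_edges x")
      case True
      then have "(Suc (Suc j) < length x \<and> e = path_edge x (Suc j)) \<or> (0 < Suc j \<and> e = path_edge x j)"
        using pe_at[OF dx True, of "Suc j"] e j len by simp
      then show ?thesis using e len by auto
    next
      case False then show ?thesis using e unfolding N_def by auto
    qed
  next
    fix e assume e: "e \<in> (if Suc j = n then N (Suc j) else insert (path_edge x (Suc j)) (N (Suc j)))"
    show "e \<in> {e'\<in>E. x!Suc j \<in> e' \<and> e' \<noteq> path_edge x j}"
    proof (cases "e \<in> N (Suc j)")
      case True then show ?thesis using inpe[OF j] unfolding N_def by auto
    next
      case False
      then have "Suc j < n" "e = path_edge x (Suc j)" using e j by (auto split: if_splits)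
      then show ?thesis using pE[of "Suc j"] j pe_ne[of j] by (auto simp: path_edge_def)
    qed
  qed
  have QL: "Qe E q (path_edge x j) (x!j) = (if j=0 then P 0 else b (j-1) * P j)" if j: "j<n" for j
  proof (cases "j = 0")
    case True then show ?thesis using S1[OF j] unfolding Qe_def P_N by simp
  next
    case False
    have nin: "path_edge x (j-1) \<notin> N j" using inpe[of "j-1"] j unfolding N_def by auto
    have "Qe E q (path_edge x j) (x!j) = q (path_edge x (j-1)) (x!j) * P j"
      using S1[OF j] False nin finN[of j] unfolding Qe_def P_N by simp
    then show ?thesis using False unfolding b_def by simp
  qed
  have QR: "Qe E q (path_edge x j) (x!Suc j) = (if Suc j = n then P n else c (Suc j) * P (Suc j))"
    if j: "j<n" for j
  proof (cases "Suc j = n")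
    case True then show ?thesis using S2[OF j] unfolding Qe_def P_N by simp
  next
    case False
    have nin: "path_edge x (Suc j) \<notin> N (Suc j)" using inpe[of "Suc j"] j False unfolding N_def by auto
    show ?thesis
      using S2[OF j] False nin finN[of "Suc j"] unfolding Qe_def P_N c_def by simp
  qed
  have DE: "det_edge E q (x!j) (x!Suc j) = c j * b j -
      (if j=0 then P 0 else b (j-1) * P j) * (if Suc j = n then P n else c (Suc j) * P (Suc j))"
    if j: "j<n" for j
  proof -
    have "det_edge E q (x!j) (x!Suc j) = q (path_edge x j) (x!j) * q (path_edge x j) (x!Suc j)
       - Qe E q (path_edge x j) (x!j) * Qe E q (path_edge x j) (x!Suc j)"
      by (simp add: det_edge_def path_edge_def)
    then show ?thesis using QL[OF j] QR[OF j] unfolding c_def b_def by simp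
  qed
  have DP: "det_path E q x = c 0 * b (n-1) - (\<Prod>i\<in>{0<..n-1}. P i)^2 * P 0 * P n"
  proof -
    have "{0<..n-1} = {0<..<n}" using n1 by auto
    moreover have "Suc (n-1) = n" using n1 by simp
    ultimately show ?thesis unfolding det_path_def Let_def Qstar_def c_def b_def P_def
      using len by simp
  qed
  have cpos: "c j > 0" if "j<n" for j using F1[OF that] unfolding c_def by simp
  have Ppos: "P i > 0" if "0<i" "i\<le>n" for i
    unfolding P_N
  proof (rule prod_pos)
    fix e assume "e \<in> N i"
    then have "e \<in> E" "x!i \<in> e" "e \<notin> path_edges x" unfolding N_def by auto
    from F2[OF that this] show "0 < q e (x!i)" by simp
  qed
  have last: "(if Suc (n-1) = n then P n else c (Suc (n-1)) * P (Suc (n-1))) = P n" using n1 by simp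
  show ?thesis
  proof (intro conjI impI)
    assume h: "\<forall>j<n. det_edge E q (x!j) (x!Suc j) < 0"
    have "c 0 * b (n-1) < (\<Prod>i\<in>{0<..n-1}. P i)^2 * P 0 *
             (if Suc (n-1) = n then P n else c (Suc (n-1)) * P (Suc (n-1)))"
    proof (rule chain_neg[where n=n])
      fix j assume j: "j < n"
      show "c j * b j < (if j=0 then P 0 else b (j-1) * P j) * (if Suc j = n then P n else c (Suc j) * P (Suc j))"
      proof -
        have "det_edge E q (x!j) (x!Suc j) < 0" using h j by blast
        then have "c j * b j - (if j=0 then P 0 else b (j-1) * P j) * (if Suc j = n then P n else c (Suc j) * P (Suc j)) < 0"
          by (simp only: DE[OF j])
        then show ?thesis by (rule diff_lt0)
      qed
    qed (use cpos Ppos n1 in auto)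
    then show "det_path E q x < 0" unfolding DP last by simp
  next
    assume h: "\<forall>j<n. det_edge E q (x!j) (x!Suc j) > 0"
    have "c 0 * b (n-1) > (\<Prod>i\<in>{0<..n-1}. P i)^2 * P 0 *
             (if Suc (n-1) = n then P n else c (Suc (n-1)) * P (Suc (n-1)))"
    proof (rule chain_pos[where n=n])
      fix j assume j: "j < n"
      show "c j * b j > (if j=0 then P 0 else b (j-1) * P j) * (if Suc j = n then P n else c (Suc j) * P (Suc j))"
      proof -
        have "det_edge E q (x!j) (x!Suc j) > 0" using h j by blast
        then have "c j * b j - (if j=0 then P 0 else b (j-1) * P j) * (if Suc j = n then P n else c (Suc j) * P (Suc j)) > 0"
          by (simp only: DE[OF j])
        then show ?thesis by (rule diff_gt0)
      qed
    qed (use cpos Ppos n1 in auto)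
    then show "det_path E q x > 0" unfolding DP last by simp
  qed
qed

lemma pe_rev: "Suc i < length p \<Longrightarrow> path_edge (rev p) i = path_edge p (length p - 2 - i)"
proof -
  assume that: "Suc i < length p"
  have "rev p ! i = p ! Suc (length p - 2 - i)" "rev p ! Suc i = p ! (length p - 2 - i)"
    using that by (simp_all add: rev_nth Suc_diff_Suc numeral_2_eq_2)
  then show ?thesis by (simp add: path_edge_def insert_commute)
qed

lemma path_edges_rev: "path_edges (rev p) = path_edges p"
proof (intro set_eqI iffI)
  fix e assume "e \<in> path_edges (rev p)"
  then obtain i where i: "Suc i < length p" "e = path_edge (rev p) i" unfolding path_edges_def by auto
  then have "e = path_edge p (length p - 2 - i)" "Suc (length p - 2 - i) < length p"
    using pe_rev by auto
  then show "e \<in> path_edges p" unfolding path_edges_def by blast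
next
  fix e assume "e \<in> path_edges p"
  then obtain i where i: "Suc i < length p" "e = path_edge p i" unfolding path_edges_def by auto
  have j: "Suc (length p - 2 - i) < length p" using i by auto
  have "length p - 2 - (length p - 2 - i) = i" using i by auto
  then have "e = path_edge (rev p) (length p - 2 - i)" using pe_rev[OF j] i by simp
  then show "e \<in> path_edges (rev p)" using j unfolding path_edges_def by auto
qed

lemma det_path_rev:
  assumes L: "length p \<ge> 2"
  shows "det_path E q (rev p) = det_path E q p"
proof -
  define n where "n = length p - 1"
  have n1: "n \<ge> 1" and Ln: "length p = Suc n" using L by (auto simp: n_def)
  have QP: "Qpath E q (rev p) u = Qpath E q p u" for u
    unfolding Qpath_def path_edges_rev by simp
  have rn: "rev p ! i = p ! (n - i)" if "i \<le> n" for i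
    using that Ln by (simp add: rev_nth)
  have QS: "Qstar E q (rev p) = Qstar E q p"
    unfolding Qstar_def QP length_rev
  proof (rule prod.reindex_bij_witness[of _ "\<lambda>i. n - i" "\<lambda>i. n - i"])
    fix i assume i: "i \<in> {0<..<length p - 1}"
    then show "n - (n - i) = i" "n - i \<in> {0<..<length p - 1}" using Ln by auto
    show "Qpath E q p (p ! (n - i)) = Qpath E q p (rev p ! i)" using rn[of i] i Ln by simp
  qed (use Ln in auto)
  have e0: "path_edge (rev p) 0 = path_edge p (n - 1)" using pe_rev[of 0 p] Ln n1 by simp
  have e1: "path_edge (rev p) (n - 1) = path_edge p 0" using pe_rev[of "n-1" p] Ln n1 by simp
  have r0: "rev p ! 0 = p ! n" and r1: "rev p ! n = p ! 0" using rn[of 0] rn[of n] by auto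
  show ?thesis unfolding det_path_def Let_def length_rev QS QP
    using Ln e0 e1 r0 r1 by (simp add: n_def[symmetric] mult_ac)
qed

lemma main_dir:
  assumes DRT: "decorated_rooted_tree V A E f q v0" and vV: "v \<in> V" and wV: "w \<in> V"
    and lt: "tree_less V A E v0 v w"
  shows "(negative_determinants V E q \<longrightarrow> det_path E q (gpath (V \<union> A) E v w) < 0) \<and>
         (positive_determinants V E q \<longrightarrow> det_path E q (gpath (V \<union> A) E v w) > 0)"
proof -
  define X0 where "X0 = V \<union> A"
  have T: "is_tree X0 E" and arr: "\<forall>\<alpha>\<in>A. card {e\<in>E. \<alpha> \<in> e} = 1"
    using DRT unfolding decorated_rooted_tree_def decorated_tree_def X0_def by auto
  have fin: "finite E" using T unfolding is_tree_def graph_def by auto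
  have v0V: "v0 \<in> V" and rq1: "\<And>e. e\<in>E \<Longrightarrow> v0 \<in> e \<Longrightarrow> q e v0 = 1"
    and rpos: "\<And>u e. u \<in> V - {v0} \<Longrightarrow> e\<in>E \<Longrightarrow> u \<in> e \<Longrightarrow>
          e \<notin> path_edges (gpath X0 E v0 u) \<Longrightarrow> q e u \<ge> 1"
    using DRT unfolding decorated_rooted_tree_def is_root_def X0_def by auto
  define r where "r = gpath X0 E v0 w"
  have rp: "is_path X0 E r" "hd r = v0" "last r = w"
    using gpath_props[OF T, of v0 w] v0V wV unfolding r_def X0_def by auto
  have dr: "distinct r" using tree_path_distinct[OF T rp(1)] .
  have vw: "v \<noteq> w" and vr: "v \<in> set r" using lt unfolding tree_less_def r_def X0_def by auto
  obtain k where k: "k < length r" "r ! k = v" using vr by (auto simp: in_set_conv_nth)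
  have rne: "r \<noteq> []" using rp unfolding is_path_def by auto
  have k1: "Suc k < length r"
  proof (rule ccontr)
    assume "\<not> Suc k < length r"
    then have "k = length r - 1" using k by simp
    then have "r ! k = last r" using rne by (simp add: last_conv_nth)
    then show False using k rp vw by simp
  qed
  define x where "x = drop k r"
  define n where "n = length r - Suc k"
  have len: "length x = Suc n" and n1: "n \<ge> 1" using k1 unfolding x_def n_def by auto
  have xp: "is_path X0 E x" unfolding x_def by (rule is_path_drop[OF rp(1) k(1)])
  have hx: "hd x = v" using k unfolding x_def by (simp add: hd_drop_conv_nth)
  have lx: "last x = w" using k rp rne unfolding x_def by (simp add: last_drop)
  have gx: "gpath (V \<union> A) E v w = x" using gpath_unique[OF T xp] hx lx unfolding X0_def by simp
  have dx: "distinct x" unfolding x_def using dr by simp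
  have xr: "x ! i = r ! (k + i)" if "i \<le> n" for i using that k unfolding x_def by simp
  have xne: "x \<noteq> []" using len by auto
  have pE: "path_edge x j \<in> E" if "j < n" for j using xp that len unfolding is_path_def by auto
  have pdist: "path_edge x i \<noteq> path_edge x j" if "i < n" "j < n" "i \<noteq> j" for i j
    using xp that len unfolding is_path_def by auto
  have x0: "x ! 0 = v" using hx xne by (simp add: hd_conv_nth)
  have xn: "x ! n = w" using lx xne len by (simp add: last_conv_nth)
  have xX: "x ! i \<in> X0" if "i \<le> n" for i using xp that len unfolding is_path_def by auto
  have xV: "x ! i \<in> V" if i: "i \<le> n" for i
  proof (cases "0 < i \<and> i < n")
    case False
    then have "i = 0 \<or> i = n" using i by auto
    then show ?thesis using x0 xn vV wV by auto
  next
    case True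
    show ?thesis
    proof (rule ccontr)
      assume "x ! i \<notin> V"
      then have xa: "x ! i \<in> A" using xX[OF i] unfolding X0_def by auto
      have c1: "card {e\<in>E. x!i \<in> e} = 1" using arr xa by auto
      have im: "i - 1 < n" using True by auto
      have "path_edge x (i-1) \<in> {e\<in>E. x!i \<in> e}" using pE[OF im] True
        by (simp add: path_edge_def)
      moreover have "path_edge x i \<in> {e\<in>E. x!i \<in> e}" using pE[of i] True
        by (simp add: path_edge_def)
      ultimately have "path_edge x (i-1) = path_edge x i" using c1
        by (metis card_1_singletonE singletonD)
      moreover have "i - 1 \<noteq> i" using True by auto
      ultimately show False using pdist[of "i-1" i] True im by blast
    qed
  qed
  have gt: "gpath X0 E v0 (x!i) = take (Suc (k+i)) r" if i: "i \<le> n" for i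
  proof -
    have tp: "is_path X0 E (take (Suc (k+i)) r)" using is_path_take[OF rp(1), of "k+i"] i n_def k1
      by simp
    have "hd (take (Suc (k+i)) r) = v0" using rp rne by simp
    moreover have "last (take (Suc (k+i)) r) = x!i"
    proof -
      have ki: "k + i < length r" using i n_def k1 by simp
      show ?thesis using xr[OF i] by (simp add: take_Suc_conv_app_nth[OF ki])
    qed
    ultimately show ?thesis using gpath_unique[OF T tp] by simp
  qed
  have RW: "0 < k+i \<and> e = path_edge r (k+i-1)"
    if i: "i \<le> n" and e: "e \<in> path_edges (take (Suc (k+i)) r)" and xe: "x!i \<in> e" for i e
  proof -
    have ki: "k + i < length r" using i n_def k1 by simp
    have "take (Suc (k+i)) r ! (k+i) \<in> e" using xe xr[OF i] ki by simp
    from pe_at[OF _ e _ this] dr ki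
    have h: "0 < k+i \<and> e = path_edge (take (Suc (k+i)) r) (k+i-1)" by simp
    moreover have "path_edge (take (Suc (k+i)) r) (k+i-1) = path_edge r (k+i-1)"
      using ki h by (simp add: path_edge_def)
    ultimately show ?thesis by simp
  qed
  have hpos: "q e (x!i) \<ge> 1"
    if i: "i \<le> n" and eE: "e \<in> E" and xe: "x!i \<in> e" and ne: "0 < k+i \<longrightarrow> e \<noteq> path_edge r (k+i-1)"
    for i e
  proof (cases "x!i = v0")
    case True then show ?thesis using rq1 eE xe by simp
  next
    case False
    have "e \<notin> path_edges (gpath X0 E v0 (x!i))" using RW[OF i _ xe] ne gt[OF i] by auto
    then show ?thesis using rpos[of "x!i" e] False xV[OF i] eE xe by simp
  qed
  have F1: "q (path_edge x j) (x!j) \<ge> 1" if j: "j < n" for j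
  proof (rule hpos)
    show "j \<le> n" "path_edge x j \<in> E" "x ! j \<in> path_edge x j" using j pE by (auto simp: path_edge_def)
    show "0 < k + j \<longrightarrow> path_edge x j \<noteq> path_edge r (k + j - 1)"
    proof
      assume kj: "0 < k + j"
      have ix: "Suc (k+j) < length r" using j n_def k1 by simp
      have "x ! Suc j = r ! Suc (k+j)" using xr[of "Suc j"] j by simp
      moreover have "r ! Suc (k+j) \<noteq> r ! (k+j-1)"
        using nth_eq_iff_index_eq[OF dr, of "Suc (k+j)" "k+j-1"] ix by simp
      moreover have "r ! Suc (k+j) \<noteq> r ! (k+j)"
        using nth_eq_iff_index_eq[OF dr, of "Suc (k+j)" "k+j"] ix by simp
      moreover have "path_edge r (k + j - 1) = {r ! (k+j-1), r ! (k+j)}"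
        using kj by (simp add: path_edge_def)
      ultimately show "path_edge x j \<noteq> path_edge r (k + j - 1)"
        by (auto simp: path_edge_def)
    qed
  qed
  have F2: "q e (x!i) \<ge> 1"
    if "0<i" "i\<le>n" "e \<in> E" "x!i \<in> e" "e \<notin> path_edges x" for i e
  proof (rule hpos[OF that(2,3,4)])
    have "path_edge r (k+i-1) = path_edge x (i-1)"
      using xr[of i] xr[of "i-1"] that by (simp add: path_edge_def)
    moreover have "path_edge x (i-1) \<in> path_edges x" using that len unfolding path_edges_def by force
    ultimately show "0 < k + i \<longrightarrow> e \<noteq> path_edge r (k + i - 1)" using that by auto
  qed
  note core = path_det_core[where q=q, OF fin dx len n1 pE F1 F2]
  have eV: "x!j \<in> V" "x!Suc j \<in> V" "{x!j, x!Suc j} \<in> E" if "j<n" for j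
    using xV[of j] xV[of "Suc j"] pE[of j] that by (auto simp: path_edge_def)
  show ?thesis unfolding gx
  proof (intro conjI impI)
    assume "negative_determinants V E q"
    then have "\<forall>j<n. det_edge E q (x!j) (x!Suc j) < 0" using eV unfolding negative_determinants_def by blast
    then show "det_path E q x < 0" using core by blast
  next
    assume "positive_determinants V E q"
    then have "\<forall>j<n. det_edge E q (x!j) (x!Suc j) > 0" using eV unfolding positive_determinants_def by blast
    then show "det_path E q x > 0" using core by blast
  qed
qed

theorem proposition5p7:
  fixes V A :: "'a set" and E :: "'a set set" and f :: "'a \<Rightarrow> int"
    and q :: "'a set \<Rightarrow> 'a \<Rightarrow> int" and v0 v w :: 'a
  assumes "decorated_rooted_tree V A E f q v0"
    and "v \<in> V" and "w \<in> V"
    and "tree_less V A E v0 v w \<or> tree_less V A E v0 w v"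
  shows "(negative_determinants V E q \<longrightarrow> det_path E q (gpath (V \<union> A) E v w) < 0) \<and>
         (positive_determinants V E q \<longrightarrow> det_path E q (gpath (V \<union> A) E v w) > 0)"
proof (cases "tree_less V A E v0 v w")
  case True show ?thesis using main_dir[OF assms(1,2,3) True] by simp
next
  case False
  then have lt: "tree_less V A E v0 w v" using assms(4) by blast
  have T: "is_tree (V \<union> A) E"
    using assms(1) unfolding decorated_rooted_tree_def decorated_tree_def by auto
  define p where "p = gpath (V \<union> A) E w v"
  have pp: "is_path (V \<union> A) E p" "hd p = w" "last p = v"
    using gpath_props[OF T, of w v] assms(2,3) unfolding p_def by auto
  have pne: "p \<noteq> []" using pp unfolding is_path_def by auto
  have vw: "v \<noteq> w" using lt unfolding tree_less_def by auto
  have L: "length p \<ge> 2"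
  proof (rule ccontr)
    assume "\<not> length p \<ge> 2"
    moreover have "length p \<noteq> 0" using pne by simp
    ultimately have "length p = 1" by linarith
    then obtain a where "p = [a]" by (metis One_nat_def length_0_conv length_Suc_conv)
    then have "hd p = last p" by simp
    then show False using pp vw by simp
  qed
  have "gpath (V \<union> A) E v w = rev p"
    using gpath_unique[OF T is_path_rev[OF pp(1)]] pp pne by (simp add: hd_rev last_rev)
  then have "det_path E q (gpath (V \<union> A) E v w) = det_path E q (gpath (V \<union> A) E w v)"
    using det_path_rev[OF L] unfolding p_def by simp
  then show ?thesis using main_dir[OF assms(1,3,2) lt] by simp
qed

end
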